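(* Let $G$ be a probability distribution on $\mathbb{R}$ (not necessarily symmetric), and let $\mu\sim G$, $Z\mid\mu\sim\mathrm{N}(\mu,1)$. Consider the optimization problems over functions $\delta:\mathbb{R}\to\mathbb{R}$: (a) minimize $\mathbb{E}_G[(\delta(Z)-\mu)^2]$ subject to $\delta$ being odd, i.e. $\delta(-z)=-\delta(z)$ for all $z$; (b) minimize $\sup\{\mathbb{E}_{\tilde G}[(\delta(Z)-\mu)^2]:\ \tilde G \text{ a distribution on }\mathbb{R}\text{ with } \mathrm{Symm}[\tilde G]=\mathrm{Symm}[G]\}$, where under $\mathbb{E}_{\tilde G}$ we have $\mu\sim\tilde G$, $Z\mid\mu\sim\mathrm{N}(\mu,1)$. Then the solution of both problems is the symmetrized posterior mean $\delta^{\mathrm{Symm}}_G(z)=\mathbb{E}_{\mathrm{Symm}[G]}[\mu\mid Z=z]$.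
   Context: $\mathrm{Symm}[G](A)=\{G(A)+G(-A)\}/2$ for Borel $A$ (the law of $\epsilon\mu$ with $\mu\sim G$ and $\epsilon$ an independent uniform random sign). $\mathbb{E}_{\mathrm{Symm}[G]}[\mu\mid Z=z]=\int\mu\varphi(z;\mu)\mathrm{Symm}[G](d\mu)/\int\varphi(z;\mu)\mathrm{Symm}[G](d\mu)$, where $\varphi(z;\mu)$ is the $\mathrm{N}(\mu,1)$ density. *)

theory Defs
  imports "HOL-Probability.Probability"
begin

definition Symm :: "real measure \<Rightarrow> real measure" where
  "Symm G = measure_of UNIV (sets borel)
     (\<lambda>A. (emeasure G A + emeasure G ((\<lambda>x. - x) -` A)) / 2)"

definition is_distr :: "real measure \<Rightarrow> bool" where
  "is_distr G \<longleftrightarrow> prob_space G \<and> sets G = sets borel"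

definition risk :: "real measure \<Rightarrow> (real \<Rightarrow> real) \<Rightarrow> ennreal" where
  "risk G \<delta> = (\<integral>\<^sup>+ \<mu>. (\<integral>\<^sup>+ z. ennreal ((\<delta> z - \<mu>)\<^sup>2 * normal_density \<mu> 1 z) \<partial>lborel) \<partial>G)"

definition worst_risk :: "real measure \<Rightarrow> (real \<Rightarrow> real) \<Rightarrow> ennreal" where
  "worst_risk G \<delta> = (SUP G' \<in> {G'. is_distr G' \<and> Symm G' = Symm G}. risk G' \<delta>)"

definition delta_symm :: "real measure \<Rightarrow> real \<Rightarrow> real" where
  "delta_symm G z = (\<integral> m. m * normal_density m 1 z \<partial>Symm G) / (\<integral> m. normal_density m 1 z \<partial>Symm G)"

end

theory Submission
  imports Defs "HOL-Probability.Probability"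
begin

lemma hh: "ennreal (1/2) * x + ennreal (1/2) * y = (x + y) / 2"
proof -
  have h: "ennreal (1/2) = 1/2" using divide_ennreal[of 1 2] by simp
  have "(x + y) / 2 = (x + y) * ennreal (1/2)" by (simp add: h ennreal_times_divide divide_ennreal_def)
  also have "\<dots> = ennreal (1/2) * x + ennreal (1/2) * y" by (simp add: distrib_right mult.commute)
  finally show ?thesis by simp
qed

lemma uminus_sets: "A \<in> sets borel \<Longrightarrow> (\<lambda>x::real. - x) -` A \<in> sets borel"
  by (rule measurable_sets_borel[of _ borel]) auto

definition SK :: "real measure \<Rightarrow> bool \<Rightarrow> real measure" where
  "SK G b = (if b then G else distr G borel uminus)"

definition SB :: "real measure \<Rightarrow> real measure" where
  "SB G = measure_pmf (bernoulli_pmf (1/2)) \<bind> SK G"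

lemma SK_prob:
  assumes "is_distr G"
  shows "prob_space (SK G b)"
proof -
  have ps: "prob_space G" and sG: "sets G = sets borel" using assms by (auto simp: is_distr_def)
  have "prob_space (distr G borel uminus)"
    by (rule prob_space.prob_space_distr[OF ps]) (simp add: measurable_cong_sets[OF sG refl])
  then show ?thesis using ps by (auto simp: SK_def)
qed

lemma SK_sets: "is_distr G \<Longrightarrow> sets (SK G b) = sets borel"
  by (simp add: SK_def is_distr_def)

lemma SK_meas:
  assumes "is_distr G"
  shows "SK G \<in> measurable (measure_pmf (bernoulli_pmf (1/2))) (subprob_algebra borel)"
proof -
  have "SK G b \<in> space (subprob_algebra borel)" for b
    unfolding space_subprob_algebra
    using SK_prob[OF assms, of b] SK_sets[OF assms, of b] prob_space_imp_subprob_space by blast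
  then show ?thesis unfolding measurable_pmf_measure1 by blast
qed

lemma nn_integral_SB:
  assumes "is_distr G" and f: "f \<in> borel_measurable borel"
  shows "(\<integral>\<^sup>+x. f x \<partial>SB G) = ennreal (1/2) * (\<integral>\<^sup>+x. f x \<partial>G) + ennreal (1/2) * (\<integral>\<^sup>+x. f (- x) \<partial>G)"
proof -
  have sG: "sets G = sets borel" using assms by (auto simp: is_distr_def)
  have "(\<integral>\<^sup>+x. f x \<partial>SB G) = (\<integral>\<^sup>+b. \<integral>\<^sup>+y. f y \<partial>SK G b \<partial>measure_pmf (bernoulli_pmf (1/2)))"
    unfolding SB_def by (rule nn_integral_bind[OF f SK_meas[OF assms(1)]])
  also have "\<dots> = (\<Sum>b\<in>UNIV. (\<integral>\<^sup>+y. f y \<partial>SK G b) * pmf (bernoulli_pmf (1/2)) b)"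
    by (subst nn_integral_measure_pmf_finite) auto
  also have "\<dots> = ennreal (1/2) * (\<integral>\<^sup>+x. f x \<partial>G) + ennreal (1/2) * (\<integral>\<^sup>+x. f (- x) \<partial>G)"
    using f by (simp add: UNIV_bool SK_def nn_integral_distr measurable_cong_sets[OF sG refl] mult.commute add.commute)
  finally show ?thesis .
qed

lemma emeasure_SB:
  assumes "is_distr G" and A: "A \<in> sets borel"
  shows "emeasure (SB G) A = (emeasure G A + emeasure G ((\<lambda>x. - x) -` A)) / 2"
proof -
  have sG: "sets G = sets borel" using assms by (auto simp: is_distr_def)
  have sB: "sets (SB G) = sets borel"
    unfolding SB_def by (rule sets_bind) (auto simp: SK_def sG)
  have "emeasure (SB G) A = (\<integral>\<^sup>+x. indicator A x \<partial>SB G)"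
    using A sB by simp
  also have "\<dots> = ennreal (1/2) * (\<integral>\<^sup>+x. indicator A x \<partial>G) + ennreal (1/2) * (\<integral>\<^sup>+x. indicator A (- x) \<partial>G)"
    using A by (intro nn_integral_SB assms) auto
  also have "(\<lambda>x. indicator A (- x) :: ennreal) = indicator ((\<lambda>x. - x) -` A)"
    by (auto simp: indicator_def)
  also have "(\<integral>\<^sup>+x. indicator ((\<lambda>x. - x) -` A) x \<partial>G) = emeasure G ((\<lambda>x. - x) -` A)"
    using A sG by (intro nn_integral_indicator) (simp add: uminus_sets)
  also have "(\<integral>\<^sup>+x. indicator A x \<partial>G) = emeasure G A"
    using A sG by simp
  finally have e: "emeasure (SB G) A = ennreal (1/2) * emeasure G A + ennreal (1/2) * emeasure G ((\<lambda>x. - x) -` A)" .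
  show ?thesis unfolding e by (rule hh)
qed

lemma Symm_SB:
  assumes "is_distr G"
  shows "Symm G = SB G"
proof -
  have sG: "sets G = sets borel" using assms by (auto simp: is_distr_def)
  have sB: "sets (SB G) = sets borel"
    unfolding SB_def by (rule sets_bind) (auto simp: SK_def sG)
  have spB: "space (SB G) = UNIV" using sets_eq_imp_space_eq[OF sB] by simp
  have "SB G = measure_of UNIV (sets borel) (emeasure (SB G))"
    using measure_of_of_measure[of "SB G"] sB spB by simp
  also have "\<dots> = Symm G"
    unfolding Symm_def
  proof (rule measure_of_eq)
    show "sets borel \<subseteq> Pow (UNIV :: real set)" by simp
    have ss: "sigma_sets UNIV (sets borel) = sets (borel :: real measure)"
      using sets.sigma_sets_eq[of "borel :: real measure"] by simp
    fix a :: "real set" assume "a \<in> sigma_sets UNIV (sets borel)"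
    then have "a \<in> sets borel" using ss by metis
    then show "emeasure (SB G) a = (emeasure G a + emeasure G ((\<lambda>x. - x) -` a)) / 2"
      by (rule emeasure_SB[OF assms])
  qed
  finally show ?thesis ..
qed

lemma Symm_props:
  assumes G: "is_distr G"
  shows "prob_space (Symm G)" "sets (Symm G) = sets borel"
    "\<And>f. f \<in> borel_measurable borel \<Longrightarrow> (\<integral>\<^sup>+x. f x \<partial>Symm G) = ennreal (1/2) * (\<integral>\<^sup>+x. f x \<partial>G) + ennreal (1/2) * (\<integral>\<^sup>+x. f (- x) \<partial>G)"
    "\<And>A. A \<in> sets borel \<Longrightarrow> emeasure (Symm G) A = (emeasure G A + emeasure G ((\<lambda>x. - x) -` A)) / 2"
proof -
  have sG: "sets G = sets borel" using assms by (auto simp: is_distr_def)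
  show sB: "sets (Symm G) = sets borel"
    unfolding Symm_SB[OF G] SB_def by (rule sets_bind) (auto simp: SK_def sG)
  show "prob_space (Symm G)"
    unfolding Symm_SB[OF G] SB_def
    by (rule prob_space.prob_space_bind[OF measure_pmf.prob_space_axioms _ SK_meas[OF G]])
       (auto intro: SK_prob[OF G])
  show "\<And>f. f \<in> borel_measurable borel \<Longrightarrow> (\<integral>\<^sup>+x. f x \<partial>Symm G) = ennreal (1/2) * (\<integral>\<^sup>+x. f x \<partial>G) + ennreal (1/2) * (\<integral>\<^sup>+x. f (- x) \<partial>G)"
    unfolding Symm_SB[OF G] by (rule nn_integral_SB[OF G])
  show "\<And>A. A \<in> sets borel \<Longrightarrow> emeasure (Symm G) A = (emeasure G A + emeasure G ((\<lambda>x. - x) -` A)) / 2"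
    unfolding Symm_SB[OF G] by (rule emeasure_SB[OF G])
qed

lemma nd_bounds:
  fixes m z :: real
  shows "0 < normal_density m 1 z" "normal_density m 1 z \<le> 1"
    "m\<^sup>2 * normal_density m 1 z \<le> 4 + 2 * z\<^sup>2"
    "\<bar>m\<bar> * normal_density m 1 z \<le> 5 + 2 * z\<^sup>2"
proof -
  define e where "e = exp (- (z - m)\<^sup>2 / 2)"
  define c where "c = 1 / sqrt (2 * pi)"
  have nd: "normal_density m 1 z = c * e" by (simp add: normal_density_def e_def c_def)
  have e0: "0 < e" and e1: "e \<le> 1" by (auto simp: e_def)
  have c0: "0 < c" by (simp add: c_def)
  have "1 \<le> sqrt (2 * pi)" using pi_gt3 by (simp add: real_le_rsqrt)
  then have c1: "c \<le> 1" by (simp add: c_def)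
  have ee: "e * exp ((z - m)\<^sup>2 / 2) = 1" by (simp add: e_def flip: exp_add)
  have "1 + (z - m)\<^sup>2 / 2 \<le> exp ((z - m)\<^sup>2 / 2)" by (rule exp_ge_add_one_self)
  then have "e * (1 + (z - m)\<^sup>2 / 2) \<le> e * exp ((z - m)\<^sup>2 / 2)"
    using e0 by (intro mult_left_mono) auto
  then have "e * (1 + (z - m)\<^sup>2 / 2) \<le> 1" unfolding ee .
  moreover have "e * (1 + (z - m)\<^sup>2 / 2) = e + (z - m)\<^sup>2 * e / 2" by (simp add: algebra_simps)
  ultimately have t: "(z - m)\<^sup>2 * e \<le> 2" using e0 by linarith
  have mm: "m\<^sup>2 \<le> 2 * (z - m)\<^sup>2 + 2 * z\<^sup>2"
  proof -
    have "0 \<le> (z + (z - m))\<^sup>2" by simp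
    then show ?thesis by (simp add: power2_eq_square algebra_simps)
  qed
  have "m\<^sup>2 * e \<le> (2 * (z - m)\<^sup>2 + 2 * z\<^sup>2) * e" using mm e0 by (simp add: mult_right_mono)
  also have "\<dots> = 2 * ((z - m)\<^sup>2 * e) + 2 * z\<^sup>2 * e" by (simp add: algebra_simps)
  also have "\<dots> \<le> 4 + 2 * z\<^sup>2"
  proof -
    have "z\<^sup>2 * e \<le> z\<^sup>2" using e1 by (intro mult_left_le) auto
    then show ?thesis using t by linarith
  qed
  finally have me: "m\<^sup>2 * e \<le> 4 + 2 * z\<^sup>2" .
  show "0 < normal_density m 1 z" using c0 e0 nd by simp
  show nd1: "normal_density m 1 z \<le> 1" using c1 e1 c0 e0 nd by (simp add: mult_le_one)
  have "m\<^sup>2 * normal_density m 1 z = c * (m\<^sup>2 * e)" by (simp add: nd)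
  also have "\<dots> \<le> 1 * (4 + 2 * z\<^sup>2)" using c0 c1 me e0
    by (intro mult_mono) auto
  finally show m2: "m\<^sup>2 * normal_density m 1 z \<le> 4 + 2 * z\<^sup>2" by simp
  have "\<bar>m\<bar> \<le> 1 + m\<^sup>2"
  proof -
    have "0 \<le> (\<bar>m\<bar> - 1)\<^sup>2" by simp
    moreover have "(\<bar>m\<bar> - 1)\<^sup>2 = m\<^sup>2 - 2 * \<bar>m\<bar> + 1"
      by (simp add: power2_eq_square algebra_simps)
    moreover have "0 \<le> m\<^sup>2" by simp
    ultimately show ?thesis by linarith
  qed
  then have "\<bar>m\<bar> * normal_density m 1 z \<le> (1 + m\<^sup>2) * normal_density m 1 z"
    using c0 e0 nd by (intro mult_right_mono) auto
  also have "\<dots> \<le> 1 + (4 + 2 * z\<^sup>2)"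
    using m2 nd1 by (simp add: distrib_right)
  finally show "\<bar>m\<bar> * normal_density m 1 z \<le> 5 + 2 * z\<^sup>2" by simp
qed

lemma half2: "(x + x) / 2 = (x::ennreal)"
proof -
  have "(x + x) / 2 = ennreal (1/2) * x + ennreal (1/2) * x" by (rule hh[symmetric])
  also have "\<dots> = (ennreal (1/2) + ennreal (1/2)) * x" by (simp add: distrib_right)
  also have "ennreal (1/2) + ennreal (1/2) = 1" by (subst ennreal_plus[symmetric]) auto
  finally show ?thesis by simp
qed

lemma Symm_sym:
  assumes G: "is_distr G"
  shows "distr (Symm G) borel uminus = Symm G"
proof (rule measure_eqI)
  have sS: "sets (Symm G) = sets borel" by (rule Symm_props(2)[OF G])
  show "sets (distr (Symm G) borel uminus) = sets (Symm G)" using sS by simp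
  fix A assume "A \<in> sets (distr (Symm G) borel uminus)"
  then have A: "A \<in> sets borel" by simp
  have spS: "space (Symm G) = UNIV" using sets_eq_imp_space_eq[OF sS] by simp
  have mu: "(uminus :: real \<Rightarrow> real) \<in> measurable (Symm G) borel"
    unfolding measurable_cong_sets[OF sS refl] by simp
  have vv: "(\<lambda>x::real. - x) -` ((\<lambda>x. - x) -` A) = A" by auto
  have "emeasure (distr (Symm G) borel uminus) A = emeasure (Symm G) ((\<lambda>x. - x) -` A)"
    using emeasure_distr[OF mu A] spS by simp
  also have "\<dots> = (emeasure G ((\<lambda>x. - x) -` A) + emeasure G A) / 2"
    using Symm_props(4)[OF G uminus_sets[OF A]] vv by simp
  also have "\<dots> = emeasure (Symm G) A"
    using Symm_props(4)[OF G A] by (simp add: add.commute)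
  finally show "emeasure (distr (Symm G) borel uminus) A = emeasure (Symm G) A" .
qed

lemma Symm_emeasure_neg:
  assumes G: "is_distr G" and A: "A \<in> sets borel"
  shows "emeasure (Symm G) ((\<lambda>x. - x) -` A) = emeasure (Symm G) A"
proof -
  have sS: "sets (Symm G) = sets borel" by (rule Symm_props(2)[OF G])
  have spS: "space (Symm G) = UNIV" using sets_eq_imp_space_eq[OF sS] by simp
  have mu: "(uminus :: real \<Rightarrow> real) \<in> measurable (Symm G) borel"
    unfolding measurable_cong_sets[OF sS refl] by simp
  have "emeasure (Symm G) A = emeasure (distr (Symm G) borel uminus) A"
    using Symm_sym[OF G] by simp
  also have "\<dots> = emeasure (Symm G) ((\<lambda>x. - x) -` A)"
    using emeasure_distr[OF mu A] spS by simp
  finally show ?thesis ..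
qed

lemma Symm_Symm:
  assumes G: "is_distr G"
  shows "Symm (Symm G) = Symm G"
proof -
  have sS: "sets (Symm G) = sets borel" by (rule Symm_props(2)[OF G])
  have spS: "space (Symm G) = UNIV" using sets_eq_imp_space_eq[OF sS] by simp
  have "Symm (Symm G) = measure_of UNIV (sets borel)
     (\<lambda>A. (emeasure (Symm G) A + emeasure (Symm G) ((\<lambda>x. - x) -` A)) / 2)"
    by (rule Symm_def)
  also have "\<dots> = measure_of UNIV (sets borel) (emeasure (Symm G))"
  proof (rule measure_of_eq)
    show "sets borel \<subseteq> Pow (UNIV :: real set)" by simp
    have ss: "sigma_sets UNIV (sets borel) = sets (borel :: real measure)"
      using sets.sigma_sets_eq[of "borel :: real measure"] by simp
    fix a :: "real set" assume "a \<in> sigma_sets UNIV (sets borel)"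
    then have "a \<in> sets borel" using ss by metis
    then show "(emeasure (Symm G) a + emeasure (Symm G) ((\<lambda>x. - x) -` a)) / 2 = emeasure (Symm G) a"
      by (simp add: Symm_emeasure_neg[OF G] half2)
  qed
  also have "\<dots> = Symm G"
    using measure_of_of_measure[of "Symm G"] sS spS by simp
  finally show ?thesis .
qed

lemma is_distr_Symm:
  assumes G: "is_distr G"
  shows "is_distr (Symm G)"
  using Symm_props(1,2)[OF G] by (simp add: is_distr_def)

lemma post_integrable:
  assumes "prob_space S" "sets S = sets borel"
  shows "integrable S (\<lambda>m. normal_density m 1 z)" "integrable S (\<lambda>m. m * normal_density m 1 z)"
    "integrable S (\<lambda>m. m\<^sup>2 * normal_density m 1 z)"
proof -
  interpret prob_space S by fact
  have mS: "\<And>N. measurable S N = measurable borel N" by (rule measurable_cong_sets[OF assms(2) refl])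
  have m1: "(\<lambda>m. normal_density m 1 z) \<in> borel_measurable borel"
    unfolding normal_density_def by measurable
  have m2: "(\<lambda>m. m * normal_density m 1 z) \<in> borel_measurable borel"
    unfolding normal_density_def by measurable
  have m3: "(\<lambda>m. m\<^sup>2 * normal_density m 1 z) \<in> borel_measurable borel"
    unfolding normal_density_def by measurable
  show "integrable S (\<lambda>m. normal_density m 1 z)"
    by (rule integrable_const_bound[where B=1])
       (auto simp: mS m1 intro!: AE_I2 simp: abs_of_pos[OF nd_bounds(1)] nd_bounds(2))
  show "integrable S (\<lambda>m. m * normal_density m 1 z)"
    by (rule integrable_const_bound[where B="5 + 2 * z\<^sup>2"])
       (auto simp: mS m2 intro!: AE_I2 simp: abs_mult abs_of_pos[OF nd_bounds(1)] nd_bounds(4))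
  show "integrable S (\<lambda>m. m\<^sup>2 * normal_density m 1 z)"
    by (rule integrable_const_bound[where B="4 + 2 * z\<^sup>2"])
       (auto simp: mS m3 intro!: AE_I2 simp: abs_mult abs_of_pos[OF nd_bounds(1)] nd_bounds(3))
qed

lemma post_min:
  assumes S: "prob_space S" "sets S = sets borel"
  shows "(\<integral>\<^sup>+m. ennreal ((((\<integral> m. m * normal_density m 1 z \<partial>S) / (\<integral> m. normal_density m 1 z \<partial>S)) - m)\<^sup>2
            * normal_density m 1 z) \<partial>S)
         \<le> (\<integral>\<^sup>+m. ennreal ((d - m)\<^sup>2 * normal_density m 1 z) \<partial>S)"
proof -
  interpret prob_space S by fact
  note I = post_integrable[OF S, of z]
  define a where "a = (\<integral> m. normal_density m 1 z \<partial>S)"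
  define b where "b = (\<integral> m. m * normal_density m 1 z \<partial>S)"
  define c where "c = (\<integral> m. m\<^sup>2 * normal_density m 1 z \<partial>S)"
  have expand: "(\<integral>\<^sup>+m. ennreal ((x - m)\<^sup>2 * normal_density m 1 z) \<partial>S) = ennreal (x\<^sup>2 * a - 2 * x * b + c)" for x
  proof -
    have eq: "(\<lambda>m. (x - m)\<^sup>2 * normal_density m 1 z) =
      (\<lambda>m. x\<^sup>2 * normal_density m 1 z - 2 * x * (m * normal_density m 1 z) + m\<^sup>2 * normal_density m 1 z)"
      by (rule ext) (simp add: power2_eq_square algebra_simps)
    have int: "integrable S (\<lambda>m. (x - m)\<^sup>2 * normal_density m 1 z)"
      unfolding eq using I by auto
    have "(\<integral>\<^sup>+m. ennreal ((x - m)\<^sup>2 * normal_density m 1 z) \<partial>S) = ennreal (\<integral> m. (x - m)\<^sup>2 * normal_density m 1 z \<partial>S)"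
      by (rule nn_integral_eq_integral[OF int])
         (auto intro!: AE_I2 mult_nonneg_nonneg less_imp_le[OF nd_bounds(1)])
    also have "(\<integral> m. (x - m)\<^sup>2 * normal_density m 1 z \<partial>S) = x\<^sup>2 * a - 2 * x * b + c"
      unfolding eq a_def b_def c_def using I by simp
    finally show ?thesis .
  qed
  have a0: "0 < a"
  proof -
    have "0 \<le> a" unfolding a_def by (intro integral_nonneg_AE AE_I2 less_imp_le[OF nd_bounds(1)])
    moreover have "a \<noteq> 0"
    proof
      assume "a = 0"
      then have "AE m in S. normal_density m 1 z = 0"
        using integral_nonneg_eq_0_iff_AE[OF I(1)] unfolding a_def
        by (simp add: less_imp_le[OF nd_bounds(1)])
      then have "AE m in S. False"
        by (rule AE_mp) (auto intro!: AE_I2 simp: less_imp_neq[OF nd_bounds(1), symmetric])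
      then show False using AE_False by simp
    qed
    ultimately show ?thesis by simp
  qed
  define cc where "cc = b / a"
  have ccb: "b = cc * a" using a0 by (simp add: cc_def)
  have id: "(d\<^sup>2 * a - 2 * d * b + c) - (cc\<^sup>2 * a - 2 * cc * b + c) = a * (d - cc)\<^sup>2"
    unfolding ccb by (simp add: power2_eq_square algebra_simps)
  have "0 \<le> a * (d - cc)\<^sup>2" using a0 by simp
  then have "cc\<^sup>2 * a - 2 * cc * b + c \<le> d\<^sup>2 * a - 2 * d * b + c" using id by linarith
  then show ?thesis
    unfolding expand b_def[symmetric] a_def[symmetric] cc_def[symmetric]
    by (rule ennreal_leI)
qed

lemma risk_swap:
  assumes S: "prob_space S" "sets S = sets borel" and \<delta>[measurable]: "\<delta> \<in> borel_measurable borel"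
  shows "risk S \<delta> = (\<integral>\<^sup>+z. (\<integral>\<^sup>+m. ennreal ((\<delta> z - m)\<^sup>2 * normal_density m 1 z) \<partial>S) \<partial>lborel)"
proof -
  interpret S: prob_space S by fact
  interpret P: pair_sigma_finite S lborel
    by (simp add: pair_sigma_finite_def S.sigma_finite_measure_axioms lborel.sigma_finite_measure_axioms)
  have ss: "sets (S \<Otimes>\<^sub>M lborel) = sets (borel \<Otimes>\<^sub>M borel)"
    by (rule sets_pair_measure_cong[OF S(2)]) simp
  have m: "(\<lambda>(m, z). ennreal ((\<delta> z - m)\<^sup>2 * normal_density m 1 z)) \<in> borel_measurable (S \<Otimes>\<^sub>M lborel)"
    unfolding measurable_cong_sets[OF ss refl] normal_density_def by measurable
  show ?thesis
    unfolding risk_def by (rule P.Fubini'[OF m, symmetric])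
qed

lemma nd_neg: "normal_density (- m) 1 (- z) = normal_density m 1 z"
  by (simp add: normal_density_def power2_eq_square algebra_simps)

lemma risk_odd:
  assumes G: "is_distr G" and \<delta>[measurable]: "\<delta> \<in> borel_measurable borel"
    and odd: "\<forall>z. \<delta> (- z) = - \<delta> z"
  shows "risk (Symm G) \<delta> = risk G \<delta>"
proof -
  define h where "h \<mu> = (\<integral>\<^sup>+z. ennreal ((\<delta> z - \<mu>)\<^sup>2 * normal_density \<mu> 1 z) \<partial>lborel)" for \<mu>
  have hm: "h \<in> borel_measurable borel"
    unfolding h_def[abs_def] normal_density_def by measurable
  have hs: "h (- \<mu>) = h \<mu>" for \<mu>
  proof -
    have "h (- \<mu>) = (\<integral>\<^sup>+z. ennreal ((\<delta> z - (- \<mu>))\<^sup>2 * normal_density (- \<mu>) 1 z) \<partial>distr lborel borel uminus)"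
      unfolding lborel_distr_uminus h_def ..
    also have "\<dots> = (\<integral>\<^sup>+z. ennreal ((\<delta> (- z) - (- \<mu>))\<^sup>2 * normal_density (- \<mu>) 1 (- z)) \<partial>lborel)"
      by (rule nn_integral_distr) (simp_all add: normal_density_def)
    also have "\<dots> = h \<mu>"
      unfolding h_def nd_neg using odd
      by (intro nn_integral_cong) (simp add: power2_eq_square algebra_simps)
    finally show ?thesis .
  qed
  have "risk (Symm G) \<delta> = (\<integral>\<^sup>+\<mu>. h \<mu> \<partial>Symm G)" by (simp add: risk_def h_def)
  also have "\<dots> = ennreal (1/2) * (\<integral>\<^sup>+x. h x \<partial>G) + ennreal (1/2) * (\<integral>\<^sup>+x. h (- x) \<partial>G)"
    by (rule Symm_props(3)[OF G hm])
  also have "\<dots> = ennreal (1/2) * (\<integral>\<^sup>+x. h x \<partial>G) + ennreal (1/2) * (\<integral>\<^sup>+x. h x \<partial>G)"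
    by (simp only: hs)
  also have "(\<integral>\<^sup>+x. h x \<partial>G) = risk G \<delta>" by (simp add: risk_def h_def)
  also have "ennreal (1/2) * risk G \<delta> + ennreal (1/2) * risk G \<delta> = risk G \<delta>"
    unfolding hh by (rule half2)
  finally show ?thesis .
qed

theorem proposition5:
  fixes G :: "real measure"
  assumes "is_distr G"
  shows "delta_symm G \<in> borel_measurable borel
    \<and> (\<forall>z. delta_symm G (- z) = - delta_symm G z)
    \<and> (\<forall>\<delta> \<in> borel_measurable borel. (\<forall>z. \<delta> (- z) = - \<delta> z) \<longrightarrow> risk G (delta_symm G) \<le> risk G \<delta>)
    \<and> (\<forall>\<delta> \<in> borel_measurable borel. worst_risk G (delta_symm G) \<le> worst_risk G \<delta>)"
proof -
  define S where "S = Symm G"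
  have pS: "prob_space S" and sS: "sets S = sets borel"
    using Symm_props(1,2)[OF assms] by (simp_all add: S_def)
  interpret S: prob_space S by (rule pS)
  have ds: "delta_symm G = (\<lambda>z. (\<integral>m. m * normal_density m 1 z \<partial>S) / (\<integral>m. normal_density m 1 z \<partial>S))"
    by (rule ext) (simp add: delta_symm_def S_def)
  have meas: "delta_symm G \<in> borel_measurable borel"
  proof -
    have ss: "sets (borel \<Otimes>\<^sub>M S) = sets (borel \<Otimes>\<^sub>M borel)"
      by (rule sets_pair_measure_cong[OF refl sS])
    have m1: "(\<lambda>(z, m). m * normal_density m 1 z) \<in> borel_measurable (borel \<Otimes>\<^sub>M S)"
      unfolding measurable_cong_sets[OF ss refl] normal_density_def by measurable
    have m2: "(\<lambda>(z, m). normal_density m 1 z) \<in> borel_measurable (borel \<Otimes>\<^sub>M S)"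
      unfolding measurable_cong_sets[OF ss refl] normal_density_def by measurable
    show ?thesis unfolding ds
      by (rule borel_measurable_divide[OF S.borel_measurable_lebesgue_integral[OF m1]
            S.borel_measurable_lebesgue_integral[OF m2]])
  qed
  have oddS: "\<forall>z. delta_symm G (- z) = - delta_symm G z"
  proof
    fix z
    have symint: "(\<integral>m. f m \<partial>S) = (\<integral>m. f (- m) \<partial>S)" if "f \<in> borel_measurable borel" for f :: "real \<Rightarrow> real"
    proof -
      have "(\<integral>m. f m \<partial>S) = (\<integral>m. f m \<partial>distr S borel uminus)"
        using Symm_sym[OF assms] by (simp add: S_def)
      also have "\<dots> = (\<integral>m. f (- m) \<partial>S)"
        by (rule integral_distr) (simp_all add: measurable_cong_sets[OF sS refl] that)
      finally show ?thesis .
    qed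
    have n: "(\<integral>m. m * normal_density m 1 (- z) \<partial>S) = - (\<integral>m. m * normal_density m 1 z \<partial>S)"
    proof -
      have "(\<integral>m. m * normal_density m 1 (- z) \<partial>S) = (\<integral>m. (- m) * normal_density (- m) 1 (- z) \<partial>S)"
        by (rule symint) (simp add: normal_density_def)
      also have "\<dots> = (\<integral>m. - (m * normal_density m 1 z) \<partial>S)" by (simp add: nd_neg)
      also have "\<dots> = - (\<integral>m. m * normal_density m 1 z \<partial>S)" by (rule integral_minus)
      finally show ?thesis .
    qed
    have d: "(\<integral>m. normal_density m 1 (- z) \<partial>S) = (\<integral>m. normal_density m 1 z \<partial>S)"
    proof -
      have "(\<integral>m. normal_density m 1 (- z) \<partial>S) = (\<integral>m. normal_density (- m) 1 (- z) \<partial>S)"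
        by (rule symint) (simp add: normal_density_def)
      also have "\<dots> = (\<integral>m. normal_density m 1 z \<partial>S)" by (simp add: nd_neg)
      finally show ?thesis .
    qed
    show "delta_symm G (- z) = - delta_symm G z"
      unfolding ds by (simp add: n d)
  qed
  have minS: "risk S (delta_symm G) \<le> risk S \<delta>" if \<delta>: "\<delta> \<in> borel_measurable borel" for \<delta>
    unfolding risk_swap[OF pS sS meas] risk_swap[OF pS sS \<delta>]
    by (rule nn_integral_mono) (unfold ds, rule post_min[OF pS sS])
  have partA: "risk G (delta_symm G) \<le> risk G \<delta>"
    if \<delta>: "\<delta> \<in> borel_measurable borel" and odd: "\<forall>z. \<delta> (- z) = - \<delta> z" for \<delta>
  proof -
    have "risk G (delta_symm G) = risk S (delta_symm G)"
      unfolding S_def by (rule risk_odd[OF assms meas oddS, symmetric])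
    also have "\<dots> \<le> risk S \<delta>" by (rule minS[OF \<delta>])
    also have "\<dots> = risk G \<delta>"
      unfolding S_def by (rule risk_odd[OF assms \<delta> odd])
    finally show ?thesis .
  qed
  have partB: "worst_risk G (delta_symm G) \<le> worst_risk G \<delta>"
    if \<delta>: "\<delta> \<in> borel_measurable borel" for \<delta>
  proof -
    have "worst_risk G (delta_symm G) \<le> risk S (delta_symm G)"
      unfolding worst_risk_def
    proof (rule SUP_least)
      fix G' assume "G' \<in> {G'. is_distr G' \<and> Symm G' = Symm G}"
      then have G': "is_distr G'" "Symm G' = Symm G" by auto
      have "risk G' (delta_symm G) = risk (Symm G') (delta_symm G)"
        by (rule risk_odd[OF G'(1) meas oddS, symmetric])
      then show "risk G' (delta_symm G) \<le> risk S (delta_symm G)"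
        using G'(2) by (simp add: S_def)
    qed
    also have "\<dots> \<le> risk S \<delta>" by (rule minS[OF \<delta>])
    also have "\<dots> \<le> worst_risk G \<delta>"
      unfolding worst_risk_def
    proof (rule SUP_upper)
      show "S \<in> {G'. is_distr G' \<and> Symm G' = Symm G}"
        using is_distr_Symm[OF assms] Symm_Symm[OF assms] by (simp add: S_def)
    qed
    finally show ?thesis .
  qed
  show ?thesis using meas oddS partA partB by blast
qed

end
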